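(* Let $\delta'\in(0,1)$ and fix $X\in\mathcal X$. On the event $\mathcal E_{U,m}(\delta')$, for each $i\in[m]$ the map $\theta_i=(U_i,\operatorname{vec}(W_i))\mapsto h(X;\theta_i)$, restricted to $\{U_i:\|U_i-U_i^{(0)}\|_2\le\rho_u/\sqrt m\}\times\{W_i:\|W_i-W_i^{(0)}\|_F\le\rho_w/\sqrt m\}$, is $L_{1,m}(\delta')$-Lipschitz and $L_{2,m}(\delta')$-smooth (its gradient is $L_{2,m}(\delta')$-Lipschitz), where $L_{1,m}(\delta')=\sigma_1\sqrt{1+B_{U,m}(\delta')^2}$ and $L_{2,m}(\delta')=\sigma_2(1+B_{U,m}(\delta')^2)+8\sigma_1\sqrt{1+B_{U,m}(\delta')^2}$, with $B_{U,m}(\delta')=\sqrt d+\sqrt{2\log(m/(2\delta'))}+\rho_u/\sqrt m$.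
   Context: $\mathcal{X}=\{X=(X_1,\dots,X_T)\in\mathbb{R}^{d\times T}:\max_t\|X_t\|_2\le1\}$; each $X$ has a fixed query $q_X\in\mathbb{R}^d$, $\|q_X\|_2\le1$. Softmax $(\sigma_s(z))_t=e^{z_t}/\sum_se^{z_s}$; $a(X;W)=X\sigma_s(X^\top Wq_X)$; $h(X;\theta)=\sigma(U^\top a(X;W))$ for $\theta=(U,\operatorname{vec}(W))$, $U\in\mathbb{R}^d,W\in\mathbb{R}^{d\times d}$. $\sigma:\mathbb{R}\to\mathbb{R}$ twice differentiable with $|\sigma|\le\sigma_0,|\sigma'|\le\sigma_1,|\sigma''|\le\sigma_2$. $m$ even; $\rho_u,\rho_w>0$. Symmetric initialization: for $i\le m/2$, independently, $W_i^{(0)}$ with i.i.d. $\mathcal N(0,1)$ entries, $U_i^{(0)}\sim\mathcal N(0,I_d)$, $c_i^{(0)}$ uniform on $\{\pm1\}$, and $W_{i+m/2}^{(0)}=W_i^{(0)}$, $U_{i+m/2}^{(0)}=U_i^{(0)}$, $c_{i+m/2}^{(0)}=-c_i^{(0)}$. $\mathcal E_{U,m}(\delta')=\{\max_{i\in[m]}\|U_i^{(0)}\|_2\le\sqrt d+\sqrt{2\log(m/(2\delta'))}\}$. Norms on $\theta$ are Euclidean (Frobenius on the $W$ block). *)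

theory Defs
  imports "HOL-Analysis.Analysis"
begin

definition softmax :: "('t::finite \<Rightarrow> real) \<Rightarrow> 't \<Rightarrow> real" where
  "softmax z t = exp (z t) / (\<Sum>s\<in>UNIV. exp (z s))"

text \<open>Attention output a(X;W) = X softmax(X^T W q); X is given by its columns X t.\<close>
definition attn :: "('t::finite \<Rightarrow> real^'d) \<Rightarrow> real^'d \<Rightarrow> real^'d^'d \<Rightarrow> real^'d" where
  "attn X q W = (\<Sum>t\<in>UNIV. softmax (\<lambda>s. X s \<bullet> (W *v q)) t *\<^sub>R X t)"

text \<open>The network h(X;theta) = sigma(U^T a(X;W)), theta = (U, W) with Euclidean/Frobenius norm.\<close>
definition hnet :: "(real \<Rightarrow> real) \<Rightarrow> ('t::finite \<Rightarrow> real^'d) \<Rightarrow> real^'d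
                    \<Rightarrow> (real^'d) \<times> (real^'d^'d) \<Rightarrow> real" where
  "hnet \<sigma> X q \<theta> = \<sigma> (fst \<theta> \<bullet> attn X q (snd \<theta>))"

definition B_U :: "nat \<Rightarrow> nat \<Rightarrow> real \<Rightarrow> real \<Rightarrow> real" where
  "B_U d m \<rho>u \<delta>' = sqrt (real d) + sqrt (2 * ln (real m / (2 * \<delta>'))) + \<rho>u / sqrt (real m)"

definition L1 :: "real \<Rightarrow> real \<Rightarrow> real" where
  "L1 \<sigma>1 B = \<sigma>1 * sqrt (1 + B\<^sup>2)"

definition L2 :: "real \<Rightarrow> real \<Rightarrow> real \<Rightarrow> real" where
  "L2 \<sigma>1 \<sigma>2 B = \<sigma>2 * (1 + B\<^sup>2) + 8 * \<sigma>1 * sqrt (1 + B\<^sup>2)"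

end

theory Submission
  imports Defs
begin

definition outer :: "real^'d \<Rightarrow> real^'d \<Rightarrow> real^'d^'d" where
  "outer x q = (\<chi> i. x$i *\<^sub>R q)"

lemma outer_inner: "outer x q \<bullet> V = x \<bullet> (V *v q)"
  unfolding outer_def inner_vec_def matrix_vector_mult_def
  by (simp add: sum_distrib_left mult_ac)

lemma norm_outer: "norm (outer x q) = norm x * norm q"
proof -
  have "(norm (outer x q))\<^sup>2 = (\<Sum>i\<in>UNIV. (norm (x$i *\<^sub>R q))\<^sup>2)"
    by (subst norm_vec_def) (simp add: L2_set_def outer_def sum_nonneg)
  also have "\<dots> = (\<Sum>i\<in>UNIV. (x$i)\<^sup>2) * (norm q)\<^sup>2"
    by (simp add: sum_distrib_right power_mult_distrib)
  also have "\<dots> = (norm x * norm q)\<^sup>2"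
    by (simp add: power_mult_distrib norm_vec_def L2_set_def real_norm_def sum_nonneg)
  finally show ?thesis by (simp add: power2_eq_iff_nonneg)
qed

lemma bil_bound: fixes x q :: "real^'d" shows "\<bar>x \<bullet> (V *v q)\<bar> \<le> norm x * norm q * norm V"
proof -
  have "\<bar>outer x q \<bullet> V\<bar> \<le> norm (outer x q) * norm V" by (rule Cauchy_Schwarz_ineq2)
  then show ?thesis by (simp add: outer_inner norm_outer)
qed

lemma softmax_pos: "softmax z t > 0" unfolding softmax_def
  by (intro divide_pos_pos) (auto intro: sum_pos)
lemma softmax_sum: "(\<Sum>t\<in>UNIV. softmax z t) = 1" unfolding softmax_def
  by (metis (no_types) sum_divide_distrib div_self exp_gt_zero less_irrefl sum_pos UNIV_not_empty finite)



lemma softmax_deriv: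
  fixes \<alpha> \<beta> :: "'t::finite \<Rightarrow> real"
  shows "((\<lambda>s. softmax (\<lambda>t. \<alpha> t + s * \<beta> t) t) has_real_derivative
     softmax (\<lambda>t. \<alpha> t + s * \<beta> t) t * (\<beta> t - (\<Sum>u\<in>UNIV. softmax (\<lambda>t. \<alpha> t + s * \<beta> t) u * \<beta> u))) (at s)"
proof -
  define Z where "Z = (\<Sum>u\<in>UNIV. exp (\<alpha> u + s * \<beta> u))"
  have Z: "Z > 0" unfolding Z_def by (intro sum_pos) auto
  then have Z': "Z \<noteq> 0" by simp
  have "((\<lambda>s. exp (\<alpha> t + s * \<beta> t) / (\<Sum>u\<in>UNIV. exp (\<alpha> u + s * \<beta> u))) has_real_derivative
     (exp (\<alpha> t + s * \<beta> t) * \<beta> t * Z - exp (\<alpha> t + s * \<beta> t) * (\<Sum>u\<in>UNIV. exp (\<alpha> u + s * \<beta> u) * \<beta> u)) / Z^2) (at s)"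
    unfolding Z_def
    apply (rule derivative_eq_intros refl)+
    apply (simp_all add: Z_def[symmetric] Z' power2_eq_square)
    done
  moreover have "(exp (\<alpha> t + s * \<beta> t) * \<beta> t * Z - exp (\<alpha> t + s * \<beta> t) * (\<Sum>u\<in>UNIV. exp (\<alpha> u + s * \<beta> u) * \<beta> u)) / Z^2
     = softmax (\<lambda>t. \<alpha> t + s * \<beta> t) t * (\<beta> t - (\<Sum>u\<in>UNIV. softmax (\<lambda>t. \<alpha> t + s * \<beta> t) u * \<beta> u))"
    unfolding softmax_def Z_def[symmetric] using Z
    by (simp add: field_simps power2_eq_square sum_divide_distrib[symmetric])
  ultimately show ?thesis unfolding softmax_def by simp
qed

lemma wsum_deriv:
  fixes \<alpha> \<beta> :: "'t::finite \<Rightarrow> real" and c :: "real \<Rightarrow> 't \<Rightarrow> real"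
  assumes "\<And>t. ((\<lambda>s. c s t) has_real_derivative c' t) (at s)"
  shows "((\<lambda>s. \<Sum>t\<in>UNIV. softmax (\<lambda>t. \<alpha> t + s * \<beta> t) t * c s t) has_real_derivative
     (\<Sum>t\<in>UNIV. softmax (\<lambda>t. \<alpha> t + s * \<beta> t) t * c' t)
     + (\<Sum>t\<in>UNIV. softmax (\<lambda>t. \<alpha> t + s * \<beta> t) t * c s t * (\<beta> t - (\<Sum>u\<in>UNIV. softmax (\<lambda>t. \<alpha> t + s * \<beta> t) u * \<beta> u)))) (at s)"
  apply (rule DERIV_cong)
   apply (rule DERIV_sum)
   apply (rule DERIV_mult[OF softmax_deriv assms])
  apply (simp add: sum.distrib[symmetric])
  apply (rule sum.cong, simp)
  apply (simp add: algebra_simps)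
  done

lemma var_bound:
  fixes p a :: "'t::finite \<Rightarrow> real"
  assumes p: "\<And>t. p t \<ge> 0" "sum p UNIV = 1" and a: "\<And>t. \<bar>a t\<bar> \<le> A"
  shows "(\<Sum>t\<in>UNIV. p t * (a t - (\<Sum>s\<in>UNIV. p s * a s))^2) \<le> A^2"
proof -
  define m where "m = (\<Sum>s\<in>UNIV. p s * a s)"
  have "(\<Sum>t\<in>UNIV. p t * (a t - m)^2) = (\<Sum>t\<in>UNIV. p t * (a t)^2) - 2 * m * (\<Sum>t\<in>UNIV. p t * a t) + m^2 * sum p UNIV"
  proof -
    have "\<And>t. p t * (a t - m)^2 = p t * (a t)^2 - 2 * m * (p t * a t) + m^2 * p t"
      by (simp add: power2_eq_square algebra_simps)
    then show ?thesis by (simp add: sum.distrib sum_subtractf sum_distrib_left)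
  qed
  also have "\<dots> = (\<Sum>t\<in>UNIV. p t * (a t)^2) - m^2" using p by (simp add: m_def power2_eq_square)
  also have "\<dots> \<le> (\<Sum>t\<in>UNIV. p t * A^2)"
  proof -
    have "(\<Sum>t\<in>UNIV. p t * (a t)^2) \<le> (\<Sum>t\<in>UNIV. p t * A^2)"
    proof (rule sum_mono)
      fix t
      have "(a t)^2 \<le> A^2" using power_mono[OF a[of t] abs_ge_zero, of 2] by simp
      then show "p t * (a t)^2 \<le> p t * A^2" using p(1)[of t] by (simp add: mult_left_mono)
    qed
    then show ?thesis using zero_le_power2[of m] by linarith
  qed
  also have "\<dots> = A^2" using p by (simp add: sum_distrib_right[symmetric])
  finally show ?thesis unfolding m_def .
qed

lemma cov_bound:
  fixes p a b :: "'t::finite \<Rightarrow> real"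
  assumes p: "\<And>t. p t \<ge> 0" "sum p UNIV = 1" and a: "\<And>t. \<bar>a t\<bar> \<le> A" and b: "\<And>t. \<bar>b t\<bar> \<le> Bb"
  shows "\<bar>\<Sum>t\<in>UNIV. p t * a t * (b t - (\<Sum>s\<in>UNIV. p s * b s))\<bar> \<le> A * Bb"
proof -
  define ma where "ma = (\<Sum>s\<in>UNIV. p s * a s)"
  define mb where "mb = (\<Sum>s\<in>UNIV. p s * b s)"
  have A0: "A \<ge> 0" using a[of undefined] by linarith
  have B0: "Bb \<ge> 0" using b[of undefined] by linarith
  have "(\<Sum>t\<in>UNIV. p t * ma * (b t - mb)) = ma * ((\<Sum>t\<in>UNIV. p t * b t) - mb * sum p UNIV)"
    by (simp add: algebra_simps sum_subtractf sum_distrib_left sum_distrib_right)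
  then have z: "(\<Sum>t\<in>UNIV. p t * ma * (b t - mb)) = 0" using p by (simp add: mb_def)
  have "(\<Sum>t\<in>UNIV. p t * a t * (b t - mb)) = (\<Sum>t\<in>UNIV. p t * a t * (b t - mb)) - (\<Sum>t\<in>UNIV. p t * ma * (b t - mb))"
    using z by simp
  also have "\<dots> = (\<Sum>t\<in>UNIV. (sqrt (p t) * (a t - ma)) * (sqrt (p t) * (b t - mb)))"
  proof -
    have "\<And>t. (sqrt (p t) * (a t - ma)) * (sqrt (p t) * (b t - mb)) = p t * a t * (b t - mb) - p t * ma * (b t - mb)"
      using p(1) by (simp add: algebra_simps real_sqrt_mult_self)
    then show ?thesis by (simp add: sum_subtractf)
  qed
  finally have e: "(\<Sum>t\<in>UNIV. p t * a t * (b t - mb)) = \<dots>" .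
  have "(\<Sum>t\<in>UNIV. (sqrt (p t) * (a t - ma)) * (sqrt (p t) * (b t - mb)))^2
     \<le> (\<Sum>t\<in>UNIV. (sqrt (p t) * (a t - ma))^2) * (\<Sum>t\<in>UNIV. (sqrt (p t) * (b t - mb))^2)"
    by (rule Cauchy_Schwarz_ineq_sum)
  also have "\<dots> = (\<Sum>t\<in>UNIV. p t * (a t - ma)^2) * (\<Sum>t\<in>UNIV. p t * (b t - mb)^2)"
    using p(1) by (simp add: power_mult_distrib)
  also have "\<dots> \<le> A^2 * Bb^2"
  proof (rule mult_mono)
    show "(\<Sum>t\<in>UNIV. p t * (a t - ma)^2) \<le> A^2" using var_bound[OF p a] unfolding ma_def .
    show "(\<Sum>t\<in>UNIV. p t * (b t - mb)^2) \<le> Bb^2" using var_bound[OF p b] unfolding mb_def .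
    show "0 \<le> A^2" by simp
    show "0 \<le> (\<Sum>t\<in>UNIV. p t * (b t - mb)^2)" using p(1) by (simp add: sum_nonneg)
  qed
  also have "\<dots> = (A * Bb)^2" by (simp add: power_mult_distrib)
  finally have "(\<Sum>t\<in>UNIV. p t * a t * (b t - mb))^2 \<le> (A * Bb)^2" using e by simp
  then have "sqrt ((\<Sum>t\<in>UNIV. p t * a t * (b t - mb))^2) \<le> sqrt ((A * Bb)^2)"
    by (rule real_sqrt_le_mono)
  then have "\<bar>\<Sum>t\<in>UNIV. p t * a t * (b t - mb)\<bar> \<le> A * Bb"
    using A0 B0 by (simp only: real_sqrt_abs) simp
  then show ?thesis unfolding mb_def .
qed



lemma mvt01:
  fixes f f' :: "real \<Rightarrow> real"
  assumes d: "\<And>s. 0 \<le> s \<Longrightarrow> s \<le> 1 \<Longrightarrow> (f has_real_derivative f' s) (at s)"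
    and b: "\<And>s. 0 \<le> s \<Longrightarrow> s \<le> 1 \<Longrightarrow> \<bar>f' s\<bar> \<le> K"
  shows "\<bar>f 1 - f 0\<bar> \<le> K"
proof -
  obtain z where z: "0 < z" "z < 1" "f 1 - f 0 = (1 - 0) * f' z"
    using MVT2[of 0 1 f f'] d by auto
  then show ?thesis using b[of z] by simp
qed

lemma mean_bound:
  fixes p c :: "'t::finite \<Rightarrow> real"
  assumes p: "\<And>t. p t \<ge> 0" "sum p UNIV = 1" and c: "\<And>t. \<bar>c t\<bar> \<le> C"
  shows "\<bar>\<Sum>t\<in>UNIV. p t * c t\<bar> \<le> C"
proof -
  have "\<bar>\<Sum>t\<in>UNIV. p t * c t\<bar> \<le> (\<Sum>t\<in>UNIV. \<bar>p t * c t\<bar>)" by (rule sum_abs)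
  also have "\<dots> \<le> (\<Sum>t\<in>UNIV. p t * C)"
  proof (rule sum_mono)
    fix t show "\<bar>p t * c t\<bar> \<le> p t * C" using p(1)[of t] c[of t] by (simp add: abs_mult mult_left_mono)
  qed
  also have "\<dots> = C" using p by (simp add: sum_distrib_right[symmetric])
  finally show ?thesis .
qed

lemma abs3: fixes a b c :: real
  assumes "\<bar>a\<bar> \<le> A" "\<bar>b\<bar> \<le> Bb" "\<bar>c\<bar> \<le> C"
  shows "\<bar>a * b * c\<bar> \<le> A * Bb * C"
proof -
  have "\<bar>a\<bar> * \<bar>b\<bar> \<le> A * Bb" using assms by (intro mult_mono) auto
  then have "\<bar>a\<bar> * \<bar>b\<bar> * \<bar>c\<bar> \<le> A * Bb * C" using assms
    by (intro mult_mono) (auto intro: order_trans[OF abs_ge_zero])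
  then show ?thesis by (simp add: abs_mult)
qed

lemma abs2: fixes a b :: real
  assumes "\<bar>a\<bar> \<le> A" "\<bar>b\<bar> \<le> Bb"
  shows "\<bar>a * b\<bar> \<le> A * Bb"
  using abs3[OF assms, of 1 1] by simp



lemma path_scalar:
  fixes \<alpha> \<beta> \<gamma> \<eta> \<kappa> \<epsilon> :: "'t::finite \<Rightarrow> real" and \<sigma> \<sigma>' \<sigma>'' :: "real \<Rightarrow> real"
  assumes sig_d1: "\<And>x. (\<sigma> has_real_derivative \<sigma>' x) (at x)"
    and sig_d2: "\<And>x. (\<sigma>' has_real_derivative \<sigma>'' x) (at x)"
    and sig_b1: "\<And>x. \<bar>\<sigma>' x\<bar> \<le> \<sigma>1" and sig_b2: "\<And>x. \<bar>\<sigma>'' x\<bar> \<le> \<sigma>2"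
    and hb: "\<And>t. \<bar>\<beta> t\<bar> \<le> nV" and he: "\<And>t. \<bar>\<eta> t\<bar> \<le> nU"
    and hk: "\<And>t. \<bar>\<kappa> t\<bar> \<le> wu" and hep: "\<And>t. \<bar>\<epsilon> t\<bar> \<le> wv"
    and hy: "\<And>s t. 0 \<le> s \<Longrightarrow> s \<le> 1 \<Longrightarrow> \<bar>\<gamma> t + s * \<eta> t\<bar> \<le> B"
    and P_def: "P = (\<lambda>s. softmax (\<lambda>t. \<alpha> t + s * \<beta> t))"
    and F_def: "F = (\<lambda>s. \<Sum>t\<in>UNIV. P s t * (\<gamma> t + s * \<eta> t))"
    and \<Psi>_def: "\<Psi> = (\<lambda>s. (\<Sum>t\<in>UNIV. P s t * \<kappa> t) + (\<Sum>t\<in>UNIV. P s t * (\<gamma> t + s * \<eta> t - F s) * \<epsilon> t))"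
  shows "\<bar>\<sigma> (F 1) - \<sigma> (F 0)\<bar> \<le> \<sigma>1 * (nU + B * nV)"
    and "\<bar>\<sigma>' (F 1) * \<Psi> 1 - \<sigma>' (F 0) * \<Psi> 0\<bar>
           \<le> \<sigma>2 * ((nU + B * nV) * (wu + B * wv)) + \<sigma>1 * (wu * nV + nU * wv + 5 * B * (nV * wv))"
proof -
  have Pp: "\<And>s t. P s t \<ge> 0" unfolding P_def using softmax_pos less_imp_le by blast
  have P1: "\<And>s. sum (P s) UNIV = 1" unfolding P_def by (rule softmax_sum)
  have s1: "\<sigma>1 \<ge> 0" using sig_b1[of 0] by linarith
  have s2: "\<sigma>2 \<ge> 0" using sig_b2[of 0] by linarith
  have wv0: "wv \<ge> 0" using hep[of undefined] by linarith
  have nV0: "nV \<ge> 0" using hb[of undefined] by linarith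
  define bb where "bb s = (\<Sum>u\<in>UNIV. P s u * \<beta> u)" for s
  define ee where "ee s = (\<Sum>u\<in>UNIV. P s u * \<epsilon> u)" for s
  define F' where "F' s = (\<Sum>t\<in>UNIV. P s t * \<eta> t) + (\<Sum>t\<in>UNIV. P s t * (\<gamma> t + s * \<eta> t) * (\<beta> t - bb s))" for s
  have dF: "(F has_real_derivative F' s) (at s)" for s
  proof -
    have "((\<lambda>s. \<gamma> t + s * \<eta> t) has_real_derivative \<eta> t) (at s)" for t
      by (auto intro!: derivative_eq_intros)
    from wsum_deriv[where c="\<lambda>s t. \<gamma> t + s * \<eta> t" and c'=\<eta>, OF this]
    show ?thesis unfolding F_def F'_def bb_def P_def .
  qed
  define dK where "dK s = (\<Sum>t\<in>UNIV. P s t * \<kappa> t * (\<beta> t - bb s))" for s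
  define dYE where "dYE s = (\<Sum>t\<in>UNIV. P s t * (\<eta> t * \<epsilon> t)) + (\<Sum>t\<in>UNIV. P s t * ((\<gamma> t + s * \<eta> t) * \<epsilon> t) * (\<beta> t - bb s))" for s
  define dE where "dE s = (\<Sum>t\<in>UNIV. P s t * \<epsilon> t * (\<beta> t - bb s))" for s
  define \<Psi>2 where "\<Psi>2 s = (\<Sum>t\<in>UNIV. P s t * \<kappa> t) + (\<Sum>t\<in>UNIV. P s t * ((\<gamma> t + s * \<eta> t) * \<epsilon> t)) - F s * ee s" for s
  define \<Psi>2' where "\<Psi>2' s = dK s + dYE s - (F' s * ee s + F s * dE s)" for s
  have dK: "((\<lambda>s. \<Sum>t\<in>UNIV. P s t * \<kappa> t) has_real_derivative dK s) (at s)" for s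
  proof -
    have "((\<lambda>s. \<kappa> t) has_real_derivative 0) (at s)" for t by simp
    from wsum_deriv[where c="\<lambda>s t. \<kappa> t" and c'="\<lambda>t. 0", OF this]
    show ?thesis unfolding dK_def bb_def P_def by simp
  qed
  have dE: "(ee has_real_derivative dE s) (at s)" for s
  proof -
    have "((\<lambda>s. \<epsilon> t) has_real_derivative 0) (at s)" for t by simp
    from wsum_deriv[where c="\<lambda>s t. \<epsilon> t" and c'="\<lambda>t. 0", OF this]
    show ?thesis unfolding dE_def ee_def bb_def P_def by (simp add: fun_eq_iff)
  qed
  have dYE: "((\<lambda>s. \<Sum>t\<in>UNIV. P s t * ((\<gamma> t + s * \<eta> t) * \<epsilon> t)) has_real_derivative dYE s) (at s)" for s
  proof -
    have "((\<lambda>s. (\<gamma> t + s * \<eta> t) * \<epsilon> t) has_real_derivative \<eta> t * \<epsilon> t) (at s)" for t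
      by (auto intro!: derivative_eq_intros)
    from wsum_deriv[where c="\<lambda>s t. (\<gamma> t + s * \<eta> t) * \<epsilon> t" and c'="\<lambda>t. \<eta> t * \<epsilon> t", OF this]
    show ?thesis unfolding dYE_def bb_def P_def .
  qed
  have dPsi: "(\<Psi>2 has_real_derivative \<Psi>2' s) (at s)" for s
  proof -
    have e: "\<Psi>2 = (\<lambda>s. (\<Sum>t\<in>UNIV. P s t * \<kappa> t) + (\<Sum>t\<in>UNIV. P s t * ((\<gamma> t + s * \<eta> t) * \<epsilon> t)) - F s * ee s)"
      unfolding \<Psi>2_def by simp
    have m: "((\<lambda>x. F x * ee x) has_real_derivative F' s * ee s + F s * dE s) (at s)"
      using DERIV_mult[OF dF dE] by (simp add: mult.commute)
    show ?thesis unfolding e \<Psi>2'_def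
      by (intro DERIV_diff DERIV_add m dK dYE)
  qed
  have PsiEq: "\<Psi> s = \<Psi>2 s" for s
  proof -
    have "(\<Sum>t\<in>UNIV. P s t * (\<gamma> t + s * \<eta> t - F s) * \<epsilon> t)
        = (\<Sum>t\<in>UNIV. P s t * ((\<gamma> t + s * \<eta> t) * \<epsilon> t) - F s * (P s t * \<epsilon> t))"
      by (rule sum.cong) (simp_all add: algebra_simps)
    also have "\<dots> = (\<Sum>t\<in>UNIV. P s t * ((\<gamma> t + s * \<eta> t) * \<epsilon> t)) - F s * ee s"
      by (simp add: sum_subtractf sum_distrib_left ee_def)
    finally show ?thesis unfolding \<Psi>_def \<Psi>2_def by simp
  qed
  have PsiAlt: "\<Psi> s = (\<Sum>t\<in>UNIV. P s t * \<kappa> t) + (\<Sum>t\<in>UNIV. P s t * (\<gamma> t + s * \<eta> t) * (\<epsilon> t - ee s))" for s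
  proof -
    have "(\<Sum>t\<in>UNIV. P s t * (\<gamma> t + s * \<eta> t) * (\<epsilon> t - ee s))
        = (\<Sum>t\<in>UNIV. P s t * ((\<gamma> t + s * \<eta> t) * \<epsilon> t) - ee s * (P s t * (\<gamma> t + s * \<eta> t)))"
      by (rule sum.cong) (simp_all add: algebra_simps)
    also have "\<dots> = (\<Sum>t\<in>UNIV. P s t * ((\<gamma> t + s * \<eta> t) * \<epsilon> t)) - F s * ee s"
      by (simp add: sum_subtractf sum_distrib_left[symmetric] F_def)
    finally show ?thesis unfolding PsiEq \<Psi>2_def by simp
  qed
  have Fb: "\<bar>F s\<bar> \<le> B" if "0 \<le> s" "s \<le> 1" for s
    unfolding F_def by (rule mean_bound[OF Pp P1 hy[OF that]])
  have F'b: "\<bar>F' s\<bar> \<le> nU + B * nV" if "0 \<le> s" "s \<le> 1" for s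
  proof -
    have "\<bar>\<Sum>t\<in>UNIV. P s t * \<eta> t\<bar> \<le> nU" by (rule mean_bound[OF Pp P1 he])
    moreover have "\<bar>\<Sum>t\<in>UNIV. P s t * (\<gamma> t + s * \<eta> t) * (\<beta> t - bb s)\<bar> \<le> B * nV"
      unfolding bb_def by (rule cov_bound[OF Pp P1 hy[OF that] hb])
    ultimately show ?thesis unfolding F'_def by linarith
  qed
  have Psib: "\<bar>\<Psi> s\<bar> \<le> wu + B * wv" if "0 \<le> s" "s \<le> 1" for s
  proof -
    have "\<bar>\<Sum>t\<in>UNIV. P s t * \<kappa> t\<bar> \<le> wu" by (rule mean_bound[OF Pp P1 hk])
    moreover have "\<bar>\<Sum>t\<in>UNIV. P s t * (\<gamma> t + s * \<eta> t) * (\<epsilon> t - ee s)\<bar> \<le> B * wv"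
      unfolding ee_def by (rule cov_bound[OF Pp P1 hy[OF that] hep])
    ultimately show ?thesis unfolding PsiAlt by linarith
  qed
  have Psi2'b: "\<bar>\<Psi>2' s\<bar> \<le> wu * nV + nU * wv + 5 * B * (nV * wv)" if "0 \<le> s" "s \<le> 1" for s
  proof -
    have e1: "(\<Sum>t\<in>UNIV. P s t * \<eta> t * (\<epsilon> t - ee s))
       = (\<Sum>t\<in>UNIV. P s t * (\<eta> t * \<epsilon> t)) - ee s * (\<Sum>t\<in>UNIV. P s t * \<eta> t)"
    proof -
      have "(\<Sum>t\<in>UNIV. P s t * \<eta> t * (\<epsilon> t - ee s))
         = (\<Sum>t\<in>UNIV. P s t * (\<eta> t * \<epsilon> t) - ee s * (P s t * \<eta> t))"
        by (rule sum.cong) (simp_all add: algebra_simps)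
      then show ?thesis by (simp add: sum_subtractf sum_distrib_left)
    qed
    have e2: "(\<Sum>t\<in>UNIV. P s t * (\<gamma> t + s * \<eta> t) * ((\<epsilon> t - ee s) * (\<beta> t - bb s)))
       = (\<Sum>t\<in>UNIV. P s t * ((\<gamma> t + s * \<eta> t) * \<epsilon> t) * (\<beta> t - bb s))
         - ee s * (\<Sum>t\<in>UNIV. P s t * (\<gamma> t + s * \<eta> t) * (\<beta> t - bb s))"
    proof -
      have "(\<Sum>t\<in>UNIV. P s t * (\<gamma> t + s * \<eta> t) * ((\<epsilon> t - ee s) * (\<beta> t - bb s)))
         = (\<Sum>t\<in>UNIV. P s t * ((\<gamma> t + s * \<eta> t) * \<epsilon> t) * (\<beta> t - bb s)
              - ee s * (P s t * (\<gamma> t + s * \<eta> t) * (\<beta> t - bb s)))"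
        by (rule sum.cong) (simp_all add: algebra_simps)
      then show ?thesis by (simp add: sum_subtractf sum_distrib_left)
    qed
    have id: "\<Psi>2' s = dK s + (\<Sum>t\<in>UNIV. P s t * \<eta> t * (\<epsilon> t - ee s))
       + (\<Sum>t\<in>UNIV. P s t * (\<gamma> t + s * \<eta> t) * ((\<epsilon> t - ee s) * (\<beta> t - bb s))) - F s * dE s"
      unfolding e1 e2 \<Psi>2'_def dYE_def F'_def by (simp add: algebra_simps)
    have b1: "\<bar>dK s\<bar> \<le> wu * nV" unfolding dK_def bb_def by (rule cov_bound[OF Pp P1 hk hb])
    have b2: "\<bar>\<Sum>t\<in>UNIV. P s t * \<eta> t * (\<epsilon> t - ee s)\<bar> \<le> nU * wv"
      unfolding ee_def by (rule cov_bound[OF Pp P1 he hep])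
    have eeb: "\<bar>ee s\<bar> \<le> wv" unfolding ee_def by (rule mean_bound[OF Pp P1 hep])
    have bbb: "\<bar>bb s\<bar> \<le> nV" unfolding bb_def by (rule mean_bound[OF Pp P1 hb])
    have b3: "\<bar>\<Sum>t\<in>UNIV. P s t * (\<gamma> t + s * \<eta> t) * ((\<epsilon> t - ee s) * (\<beta> t - bb s))\<bar> \<le> B * (2 * wv) * (2 * nV)"
    proof -
      have "\<bar>(\<gamma> t + s * \<eta> t) * (\<epsilon> t - ee s) * (\<beta> t - bb s)\<bar> \<le> B * (2 * wv) * (2 * nV)" for t
      proof (rule abs3)
        show "\<bar>\<gamma> t + s * \<eta> t\<bar> \<le> B" by (rule hy[OF that])
        show "\<bar>\<epsilon> t - ee s\<bar> \<le> 2 * wv" using hep[of t] eeb by linarith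
        show "\<bar>\<beta> t - bb s\<bar> \<le> 2 * nV" using hb[of t] bbb by linarith
      qed
      then have "\<bar>\<Sum>t\<in>UNIV. P s t * ((\<gamma> t + s * \<eta> t) * (\<epsilon> t - ee s) * (\<beta> t - bb s))\<bar> \<le> B * (2 * wv) * (2 * nV)"
        by (intro mean_bound[OF Pp P1])
      then show ?thesis by (simp add: mult.assoc)
    qed
    have b4: "\<bar>F s * dE s\<bar> \<le> B * (wv * nV)"
    proof (rule abs2)
      show "\<bar>F s\<bar> \<le> B" by (rule Fb[OF that])
      show "\<bar>dE s\<bar> \<le> wv * nV" unfolding dE_def bb_def by (rule cov_bound[OF Pp P1 hep hb])
    qed
    have "\<bar>\<Psi>2' s\<bar> \<le> wu * nV + nU * wv + B * (2 * wv) * (2 * nV) + B * (wv * nV)"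
      unfolding id using b1 b2 b3 b4 by linarith
    then show ?thesis by (simp add: algebra_simps)
  qed
  show "\<bar>\<sigma> (F 1) - \<sigma> (F 0)\<bar> \<le> \<sigma>1 * (nU + B * nV)"
  proof (rule mvt01)
    show "((\<lambda>s. \<sigma> (F s)) has_real_derivative \<sigma>' (F s) * F' s) (at s)" for s
      by (rule DERIV_chain2[OF sig_d1 dF])
    show "\<bar>\<sigma>' (F s) * F' s\<bar> \<le> \<sigma>1 * (nU + B * nV)" if "0 \<le> s" "s \<le> 1" for s
      by (rule abs2[OF sig_b1 F'b[OF that]])
  qed
  have "\<bar>\<sigma>' (F 1) * \<Psi>2 1 - \<sigma>' (F 0) * \<Psi>2 0\<bar>
           \<le> \<sigma>2 * ((nU + B * nV) * (wu + B * wv)) + \<sigma>1 * (wu * nV + nU * wv + 5 * B * (nV * wv))"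
  proof (rule mvt01)
    show "((\<lambda>s. \<sigma>' (F s) * \<Psi>2 s) has_real_derivative \<sigma>'' (F s) * F' s * \<Psi>2 s + \<sigma>' (F s) * \<Psi>2' s) (at s)" for s
      using DERIV_mult[OF DERIV_chain2[OF sig_d2 dF] dPsi] by (simp add: mult.commute)
    show "\<bar>\<sigma>'' (F s) * F' s * \<Psi>2 s + \<sigma>' (F s) * \<Psi>2' s\<bar>
           \<le> \<sigma>2 * ((nU + B * nV) * (wu + B * wv)) + \<sigma>1 * (wu * nV + nU * wv + 5 * B * (nV * wv))"
      if "0 \<le> s" "s \<le> 1" for s
    proof -
      have "\<bar>\<sigma>'' (F s) * F' s * \<Psi>2 s\<bar> \<le> \<sigma>2 * (nU + B * nV) * (wu + B * wv)"
        using abs3[OF sig_b2 F'b[OF that] Psib[OF that]] PsiEq by simp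
      moreover have "\<bar>\<sigma>' (F s) * \<Psi>2' s\<bar> \<le> \<sigma>1 * (wu * nV + nU * wv + 5 * B * (nV * wv))"
        by (rule abs2[OF sig_b1 Psi2'b[OF that]])
      ultimately show ?thesis by (simp add: mult.assoc)
    qed
  qed
  then show "\<bar>\<sigma>' (F 1) * \<Psi> 1 - \<sigma>' (F 0) * \<Psi> 0\<bar>
           \<le> \<sigma>2 * ((nU + B * nV) * (wu + B * wv)) + \<sigma>1 * (wu * nV + nU * wv + 5 * B * (nV * wv))"
    by (simp add: PsiEq)
qed



lemma softmax_fderiv:
  fixes X :: "'t::finite \<Rightarrow> real^'d" and q :: "real^'d"
  shows "((\<lambda>W. softmax (\<lambda>s. X s \<bullet> (W *v q)) t) has_derivative
     (\<lambda>V. softmax (\<lambda>s. X s \<bullet> (W *v q)) t * (X t \<bullet> (V *v q)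
        - (\<Sum>u\<in>UNIV. softmax (\<lambda>s. X s \<bullet> (W *v q)) u * (X u \<bullet> (V *v q)))))) (at W)"
proof -
  have r: "\<And>W s. X s \<bullet> (W *v q) = outer (X s) q \<bullet> W" by (simp add: outer_inner)
  define Z where "Z = (\<Sum>u\<in>UNIV. exp (outer (X u) q \<bullet> W))"
  have Z: "Z > 0" unfolding Z_def by (intro sum_pos) auto
  then have Z': "Z \<noteq> 0" by simp
  show ?thesis
    unfolding r softmax_def
    apply (rule has_derivative_eq_rhs)
     apply (rule derivative_eq_intros refl)+
    apply (simp_all add: Z_def[symmetric] Z')
    apply (rule ext)
    apply (simp add: field_simps sum_divide_distrib[symmetric] Z')
    done
qed


definition pw :: "('t::finite \<Rightarrow> real^'d) \<Rightarrow> real^'d \<Rightarrow> real^'d^'d \<Rightarrow> 't \<Rightarrow> real" where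
  "pw X q W = softmax (\<lambda>s. X s \<bullet> (W *v q))"

definition dattn :: "('t::finite \<Rightarrow> real^'d) \<Rightarrow> real^'d \<Rightarrow> real^'d^'d \<Rightarrow> real^'d^'d \<Rightarrow> real^'d" where
  "dattn X q W V = (\<Sum>t\<in>UNIV. (pw X q W t * (X t \<bullet> (V *v q) - (\<Sum>u\<in>UNIV. pw X q W u * (X u \<bullet> (V *v q))))) *\<^sub>R X t)"

definition gg :: "(real \<Rightarrow> real) \<Rightarrow> ('t::finite \<Rightarrow> real^'d) \<Rightarrow> real^'d \<Rightarrow> (real^'d) \<times> (real^'d^'d) \<Rightarrow> (real^'d) \<times> (real^'d^'d)" where
  "gg \<sigma>' X q \<theta> = \<sigma>' (fst \<theta> \<bullet> attn X q (snd \<theta>)) *\<^sub>R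
     (attn X q (snd \<theta>), \<Sum>t\<in>UNIV. (pw X q (snd \<theta>) t * (fst \<theta> \<bullet> X t - fst \<theta> \<bullet> attn X q (snd \<theta>))) *\<^sub>R outer (X t) q)"

lemma attn_pw: "attn X q W = (\<Sum>t\<in>UNIV. pw X q W t *\<^sub>R X t)"
  unfolding attn_def pw_def ..

lemma inner_attn: "U \<bullet> attn X q W = (\<Sum>t\<in>UNIV. pw X q W t * (U \<bullet> X t))"
  unfolding attn_pw by (simp add: inner_sum_right)

lemma attn_fderiv: "(attn X q has_derivative dattn X q W) (at W)"
proof -
  have "((\<lambda>W. \<Sum>t\<in>UNIV. pw X q W t *\<^sub>R X t) has_derivative dattn X q W) (at W)"
    unfolding dattn_def pw_def
    by (intro has_derivative_sum has_derivative_scaleR_left softmax_fderiv)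
  then show ?thesis unfolding attn_pw[abs_def] .
qed

lemma hnet_fderiv:
  fixes X :: "'t::finite \<Rightarrow> real^'d" and \<theta> :: "(real^'d) \<times> (real^'d^'d)"
  assumes sig_d1: "\<And>x. (\<sigma> has_real_derivative \<sigma>' x) (at x)"
  shows "(hnet \<sigma> X q has_derivative (\<lambda>v. gg \<sigma>' X q \<theta> \<bullet> v)) (at \<theta>)"
proof -
  have dF: "((\<lambda>\<theta>. fst \<theta> \<bullet> attn X q (snd \<theta>)) has_derivative
      (\<lambda>v. fst \<theta> \<bullet> dattn X q (snd \<theta>) (snd v) + fst v \<bullet> attn X q (snd \<theta>))) (at \<theta>)"
    by (rule has_derivative_inner[OF has_derivative_fst[OF has_derivative_ident]
       has_derivative_compose[OF has_derivative_snd[OF has_derivative_ident] attn_fderiv]])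
  have h: "(hnet \<sigma> X q has_derivative (\<lambda>v. (fst \<theta> \<bullet> dattn X q (snd \<theta>) (snd v) + fst v \<bullet> attn X q (snd \<theta>))
       * \<sigma>' (fst \<theta> \<bullet> attn X q (snd \<theta>)))) (at \<theta>)"
    unfolding hnet_def[abs_def] by (rule DERIV_compose_FDERIV[OF sig_d1 dF])
  show ?thesis
  proof (rule has_derivative_eq_rhs[OF h], rule ext)
    fix v :: "(real^'d) \<times> (real^'d^'d)"
    obtain U W where th: "\<theta> = (U, W)" by (cases \<theta>)
    obtain u V where vv: "v = (u, V)" by (cases v)
    define p where "p = pw X q W"
    define f where "f = U \<bullet> attn X q W"
    have f: "f = (\<Sum>t\<in>UNIV. p t * (U \<bullet> X t))" unfolding f_def p_def by (rule inner_attn)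
    have L: "U \<bullet> dattn X q W V = (\<Sum>t\<in>UNIV. p t * (X t \<bullet> (V *v q)) * (U \<bullet> X t))
               - (\<Sum>u\<in>UNIV. p u * (X u \<bullet> (V *v q))) * f"
    proof -
      have "U \<bullet> dattn X q W V = (\<Sum>t\<in>UNIV. p t * (X t \<bullet> (V *v q)) * (U \<bullet> X t)
              - (\<Sum>u\<in>UNIV. p u * (X u \<bullet> (V *v q))) * (p t * (U \<bullet> X t)))"
        unfolding dattn_def p_def by (simp add: inner_sum_right algebra_simps)
      also have "\<dots> = (\<Sum>t\<in>UNIV. p t * (X t \<bullet> (V *v q)) * (U \<bullet> X t))
               - (\<Sum>u\<in>UNIV. p u * (X u \<bullet> (V *v q))) * f"
        unfolding f by (simp add: sum_subtractf sum_distrib_left)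
      finally show ?thesis .
    qed
    have R: "(\<Sum>t\<in>UNIV. (p t * (U \<bullet> X t - f)) *\<^sub>R outer (X t) q) \<bullet> V
       = (\<Sum>t\<in>UNIV. p t * (X t \<bullet> (V *v q)) * (U \<bullet> X t))
               - (\<Sum>u\<in>UNIV. p u * (X u \<bullet> (V *v q))) * f"
    proof -
      have "(\<Sum>t\<in>UNIV. (p t * (U \<bullet> X t - f)) *\<^sub>R outer (X t) q) \<bullet> V
          = (\<Sum>t\<in>UNIV. p t * (X t \<bullet> (V *v q)) * (U \<bullet> X t) - f * (p t * (X t \<bullet> (V *v q))))"
        by (simp add: inner_sum_left outer_inner algebra_simps)
      also have "\<dots> = (\<Sum>t\<in>UNIV. p t * (X t \<bullet> (V *v q)) * (U \<bullet> X t))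
               - (\<Sum>u\<in>UNIV. p u * (X u \<bullet> (V *v q))) * f"
        by (simp add: sum_subtractf sum_distrib_left mult.commute)
      finally show ?thesis .
    qed
    show "(fst \<theta> \<bullet> dattn X q (snd \<theta>) (snd v) + fst v \<bullet> attn X q (snd \<theta>)) * \<sigma>' (fst \<theta> \<bullet> attn X q (snd \<theta>))
        = gg \<sigma>' X q \<theta> \<bullet> v"
      unfolding gg_def th vv fst_conv snd_conv inner_scaleR_left inner_Pair
      unfolding p_def[symmetric] f_def[symmetric] L R
      by (simp add: algebra_simps inner_commute)
  qed
qed



lemma pw_path: "pw X q (W1 + s *\<^sub>R V) = softmax (\<lambda>t. X t \<bullet> (W1 *v q) + s * (X t \<bullet> (V *v q)))"
  unfolding pw_def by (simp add: matrix_vector_mult_add_rdistrib scaleR_matrix_vector_assoc[symmetric] inner_add_right)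

lemma path_id:
  fixes X :: "'t::finite \<Rightarrow> real^'d" and q :: "real^'d" and W1 V :: "real^'d^'d" and s :: real
  defines "P \<equiv> softmax (\<lambda>t. X t \<bullet> (W1 *v q) + s * (X t \<bullet> (V *v q)))"
  shows "hnet \<sigma> X q (U1 + s *\<^sub>R u, W1 + s *\<^sub>R V) = \<sigma> (\<Sum>t\<in>UNIV. P t * (U1 \<bullet> X t + s * (u \<bullet> X t)))"
    and "gg \<sigma>' X q (U1 + s *\<^sub>R u, W1 + s *\<^sub>R V) \<bullet> (wU, wV) =
          \<sigma>' (\<Sum>t\<in>UNIV. P t * (U1 \<bullet> X t + s * (u \<bullet> X t))) *
          ((\<Sum>t\<in>UNIV. P t * (wU \<bullet> X t)) + (\<Sum>t\<in>UNIV. P t * (U1 \<bullet> X t + s * (u \<bullet> X t)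
              - (\<Sum>t\<in>UNIV. P t * (U1 \<bullet> X t + s * (u \<bullet> X t)))) * (X t \<bullet> (wV *v q))))"
proof -
  have e: "(U1 + s *\<^sub>R u) \<bullet> attn X q (W1 + s *\<^sub>R V) = (\<Sum>t\<in>UNIV. P t * (U1 \<bullet> X t + s * (u \<bullet> X t)))"
    unfolding inner_attn pw_path P_def by (simp add: inner_add_left)
  show "hnet \<sigma> X q (U1 + s *\<^sub>R u, W1 + s *\<^sub>R V) = \<sigma> (\<Sum>t\<in>UNIV. P t * (U1 \<bullet> X t + s * (u \<bullet> X t)))"
    unfolding hnet_def using e by simp
  have a: "attn X q (W1 + s *\<^sub>R V) \<bullet> wU = (\<Sum>t\<in>UNIV. P t * (wU \<bullet> X t))"
    unfolding inner_commute[of _ wU] inner_attn pw_path P_def ..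
  have "\<And>t. (U1 + s *\<^sub>R u) \<bullet> X t = U1 \<bullet> X t + s * (u \<bullet> X t)" by (simp add: inner_add_left)
  then show "gg \<sigma>' X q (U1 + s *\<^sub>R u, W1 + s *\<^sub>R V) \<bullet> (wU, wV) =
          \<sigma>' (\<Sum>t\<in>UNIV. P t * (U1 \<bullet> X t + s * (u \<bullet> X t))) *
          ((\<Sum>t\<in>UNIV. P t * (wU \<bullet> X t)) + (\<Sum>t\<in>UNIV. P t * (U1 \<bullet> X t + s * (u \<bullet> X t)
              - (\<Sum>t\<in>UNIV. P t * (U1 \<bullet> X t + s * (u \<bullet> X t)))) * (X t \<bullet> (wV *v q))))"
    unfolding gg_def fst_conv snd_conv inner_scaleR_left inner_Pair e a
    by (simp add: inner_sum_left outer_inner pw_path P_def[symmetric])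
qed

lemma cs2: fixes a b c d :: real shows "a * c + b * d \<le> sqrt (a^2 + b^2) * sqrt (c^2 + d^2)"
proof -
  have "(a * c + b * d)^2 \<le> (a^2 + b^2) * (c^2 + d^2)"
    using zero_le_power2[of "a * d - b * c"] by (simp add: power2_eq_square algebra_simps)
  then have "sqrt ((a * c + b * d)^2) \<le> sqrt ((a^2 + b^2) * (c^2 + d^2))" by (rule real_sqrt_le_mono)
  then show ?thesis by (simp add: real_sqrt_mult)
qed

lemma nb1: fixes B a b :: real shows "a + B * b \<le> sqrt (1 + B^2) * sqrt (a^2 + b^2)"
  using cs2[of 1 a B b] by simp

lemma c8: fixes B :: real shows "1 + 5 * B \<le> 8 * sqrt (1 + B^2)"
proof -
  have "(1 + 5 * B)^2 \<le> 64 * (1 + B^2)"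
    using zero_le_power2[of "39 * B - 5"] by (simp add: power2_eq_square algebra_simps)
  then have "sqrt ((1 + 5 * B)^2) \<le> sqrt (64 * (1 + B^2))" by (rule real_sqrt_le_mono)
  moreover have s64: "sqrt (64 :: real) = 8" by (simp add: real_sqrt_eq_iff)
  have h: "sqrt (64 * (1 + B^2)) = 8 * sqrt (1 + B^2)" by (simp only: real_sqrt_mult s64)
  ultimately have "\<bar>1 + 5 * B\<bar> \<le> 8 * sqrt (1 + B^2)" by (simp only: h real_sqrt_abs)
  then show ?thesis by linarith
qed



lemma arith1:
  fixes \<sigma>1 B nU nV :: real
  assumes "\<sigma>1 \<ge> 0"
  shows "\<sigma>1 * (nU + B * nV) \<le> L1 \<sigma>1 B * sqrt (nU^2 + nV^2)"
  unfolding L1_def using mult_left_mono[OF nb1[of nU B nV] assms] by (simp add: mult.assoc)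

lemma arith2:
  fixes \<sigma>1 \<sigma>2 B nU nV wu wv :: real
  assumes s1: "\<sigma>1 \<ge> 0" and s2: "\<sigma>2 \<ge> 0" and B: "B \<ge> 0"
    and nn: "nU \<ge> 0" "nV \<ge> 0" "wu \<ge> 0" "wv \<ge> 0"
  shows "\<sigma>2 * ((nU + B * nV) * (wu + B * wv)) + \<sigma>1 * (wu * nV + nU * wv + 5 * B * (nV * wv))
     \<le> L2 \<sigma>1 \<sigma>2 B * sqrt (nU^2 + nV^2) * sqrt (wu^2 + wv^2)"
proof -
  define a where "a = sqrt (1 + B^2)"
  define nv where "nv = sqrt (nU^2 + nV^2)"
  define nw where "nw = sqrt (wu^2 + wv^2)"
  have a2: "a * a = 1 + B^2" unfolding a_def by (simp add: add_nonneg_nonneg)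
  have nv0: "nv \<ge> 0" "nw \<ge> 0" "a \<ge> 0" unfolding nv_def nw_def a_def by auto
  have h1: "nU + B * nV \<le> a * nv" unfolding a_def nv_def by (rule nb1)
  have h2: "wu + B * wv \<le> a * nw" unfolding a_def nw_def by (rule nb1)
  have h3: "(nU + B * nV) * (wu + B * wv) \<le> (a * nv) * (a * nw)"
    using h1 h2 nn B nv0 by (intro mult_mono) auto
  have h3': "(a * nv) * (a * nw) = (1 + B^2) * (nv * nw)"
  proof -
    have "(a * nv) * (a * nw) = (a * a) * (nv * nw)" by (simp add: mult_ac)
    then show ?thesis using a2 by simp
  qed
  have h4: "wu * nV + nU * wv \<le> nw * nv"
    using cs2[of wu nV wv nU] unfolding nv_def nw_def by (simp add: add.commute mult.commute)
  have nVle: "nV \<le> nv" unfolding nv_def using real_sqrt_le_mono[of "nV^2" "nU^2 + nV^2"] nn by simp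
  have wvle: "wv \<le> nw" unfolding nw_def using real_sqrt_le_mono[of "wv^2" "wu^2 + wv^2"] nn by simp
  have h5: "nV * wv \<le> nv * nw" using nVle wvle nn by (intro mult_mono) auto
  have h6: "wu * nV + nU * wv + 5 * B * (nV * wv) \<le> (1 + 5 * B) * (nv * nw)"
    using h4 mult_left_mono[OF h5, of "5 * B"] B by (simp add: algebra_simps)
  have h7: "(1 + 5 * B) * (nv * nw) \<le> (8 * a) * (nv * nw)"
    using c8[of B] nv0 unfolding a_def by (intro mult_right_mono) auto
  have "\<sigma>2 * ((nU + B * nV) * (wu + B * wv)) \<le> \<sigma>2 * ((1 + B^2) * (nv * nw))"
    using mult_left_mono[OF h3 s2] h3' by simp
  moreover have "\<sigma>1 * (wu * nV + nU * wv + 5 * B * (nV * wv)) \<le> \<sigma>1 * ((8 * a) * (nv * nw))"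
    using mult_left_mono[OF order_trans[OF h6 h7] s1] .
  ultimately have "\<sigma>2 * ((nU + B * nV) * (wu + B * wv)) + \<sigma>1 * (wu * nV + nU * wv + 5 * B * (nV * wv))
      \<le> (\<sigma>2 * (1 + B^2) + 8 * \<sigma>1 * a) * nv * nw" by (simp add: algebra_simps)
  then show ?thesis unfolding L2_def a_def nv_def nw_def .
qed



theorem lemma2:
  fixes \<sigma> \<sigma>' \<sigma>'' :: "real \<Rightarrow> real"
    and \<sigma>0 \<sigma>1 \<sigma>2 \<rho>u \<rho>w \<delta>' :: real
    and m :: nat
    and X :: "'t::finite \<Rightarrow> real^'d"
    and q :: "real^'d"
    and U0 :: "nat \<Rightarrow> real^'d"
    and W0 :: "nat \<Rightarrow> real^'d^'d"
  assumes sig_d1: "\<And>x. (\<sigma> has_real_derivative \<sigma>' x) (at x)"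
    and sig_d2: "\<And>x. (\<sigma>' has_real_derivative \<sigma>'' x) (at x)"
    and sig_b0: "\<And>x. \<bar>\<sigma> x\<bar> \<le> \<sigma>0"
    and sig_b1: "\<And>x. \<bar>\<sigma>' x\<bar> \<le> \<sigma>1"
    and sig_b2: "\<And>x. \<bar>\<sigma>'' x\<bar> \<le> \<sigma>2"
    and m_even: "even m"
    and rho_pos: "\<rho>u > 0" "\<rho>w > 0"
    and delta: "0 < \<delta>'" "\<delta>' < 1"
    and X_bd: "\<And>t. norm (X t) \<le> 1"
    and q_bd: "norm q \<le> 1"
    and event: "\<forall>i<m. norm (U0 i) \<le> sqrt (real CARD('d)) + sqrt (2 * ln (real m / (2 * \<delta>')))"
  shows "\<forall>i<m.
     (let S = {(U, W). norm (U - U0 i) \<le> \<rho>u / sqrt (real m) \<and> norm (W - W0 i) \<le> \<rho>w / sqrt (real m)};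
          B = B_U CARD('d) m \<rho>u \<delta>'
      in lipschitz_on (L1 \<sigma>1 B) S (hnet \<sigma> X q)
         \<and> (\<exists>g. (\<forall>\<theta>\<in>S. (hnet \<sigma> X q has_derivative (\<lambda>v. g \<theta> \<bullet> v)) (at \<theta>))
                 \<and> lipschitz_on (L2 \<sigma>1 \<sigma>2 B) S g))"
proof (intro allI impI)
  fix i assume i: "i < m"
  define r where "r = \<rho>u / sqrt (real m)"
  define S where "S = {(U, W). norm (U - U0 i) \<le> \<rho>u / sqrt (real m) \<and> norm (W - W0 i) \<le> \<rho>w / sqrt (real m)}"
  define B where "B = B_U CARD('d) m \<rho>u \<delta>'"
  have s1: "\<sigma>1 \<ge> 0" using sig_b1[of 0] by linarith
  have s2: "\<sigma>2 \<ge> 0" using sig_b2[of 0] by linarith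
  have r0: "r \<ge> 0" unfolding r_def using rho_pos by simp
  have U0B: "norm (U0 i) + r \<le> B" using event i unfolding B_def B_U_def r_def by auto
  have B0: "B \<ge> 0" using U0B r0 norm_ge_zero[of "U0 i"] by linarith
  have Sx: "norm (fst x - U0 i) \<le> r" if "x \<in> S" for x
    using that unfolding S_def r_def by auto
  have Xb: "\<bar>a \<bullet> X t\<bar> \<le> norm a" for a t
  proof -
    have "\<bar>a \<bullet> X t\<bar> \<le> norm a * norm (X t)" by (rule Cauchy_Schwarz_ineq2)
    also have "\<dots> \<le> norm a * 1" using X_bd[of t] by (intro mult_left_mono) auto
    finally show ?thesis by simp
  qed
  have Vb: "\<bar>X t \<bullet> (V *v q)\<bar> \<le> norm V" for t and V :: "real^'d^'d"
  proof -
    have "\<bar>X t \<bullet> (V *v q)\<bar> \<le> norm (X t) * norm q * norm V" by (rule bil_bound)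
    also have "\<dots> \<le> 1 * 1 * norm V" using X_bd[of t] q_bd by (intro mult_mono) auto
    finally show ?thesis by simp
  qed
  have hyb: "\<bar>U1 \<bullet> X t + s * ((U2 - U1) \<bullet> X t)\<bar> \<le> B"
    if "(U1, W1) \<in> S" "(U2, W2) \<in> S" "0 \<le> s" "s \<le> 1" for U1 U2 W1 W2 t and s :: real
  proof -
    have n1: "norm (U1 - U0 i) \<le> r" using Sx[OF that(1)] by simp
    have n2: "norm (U2 - U0 i) \<le> r" using Sx[OF that(2)] by simp
    have e: "U1 + s *\<^sub>R (U2 - U1) - U0 i = (1 - s) *\<^sub>R (U1 - U0 i) + s *\<^sub>R (U2 - U0 i)"
      by (simp add: algebra_simps)
    have "norm (U1 + s *\<^sub>R (U2 - U1) - U0 i) \<le> norm ((1 - s) *\<^sub>R (U1 - U0 i)) + norm (s *\<^sub>R (U2 - U0 i))"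
      unfolding e by (rule norm_triangle_ineq)
    also have "\<dots> = (1 - s) * norm (U1 - U0 i) + s * norm (U2 - U0 i)" using that by simp
    also have "\<dots> \<le> (1 - s) * r + s * r"
      using that n1 n2 by (intro add_mono mult_left_mono) auto
    finally have "norm (U1 + s *\<^sub>R (U2 - U1) - U0 i) \<le> r" by (simp add: algebra_simps)
    then have nb: "norm (U1 + s *\<^sub>R (U2 - U1)) \<le> B"
      using norm_triangle_sub[of "U1 + s *\<^sub>R (U2 - U1)" "U0 i"] U0B by linarith
    have "U1 \<bullet> X t + s * ((U2 - U1) \<bullet> X t) = (U1 + s *\<^sub>R (U2 - U1)) \<bullet> X t"
      by (simp add: inner_add_left)
    then show ?thesis using Xb[of "U1 + s *\<^sub>R (U2 - U1)" t] nb by simp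
  qed
  have lip1: "lipschitz_on (L1 \<sigma>1 B) S (hnet \<sigma> X q)"
    unfolding lipschitz_on_def
  proof (intro conjI ballI)
    show "0 \<le> L1 \<sigma>1 B" unfolding L1_def using s1 by simp
    fix x y assume x: "x \<in> S" and y: "y \<in> S"
    obtain U1 W1 where xe: "x = (U1, W1)" by (cases x)
    obtain U2 W2 where ye: "y = (U2, W2)" by (cases y)
    define u where "u = U2 - U1"
    define V where "V = W2 - W1"
    define P where "P = (\<lambda>s. softmax (\<lambda>t. X t \<bullet> (W1 *v q) + s * (X t \<bullet> (V *v q))))"
    define F where "F = (\<lambda>s. \<Sum>t\<in>UNIV. P s t * (U1 \<bullet> X t + s * (u \<bullet> X t)))"
    define \<Psi> where "\<Psi> = (\<lambda>s. (\<Sum>t\<in>UNIV. P s t * (\<lambda>t. 0::real) t) + (\<Sum>t\<in>UNIV. P s t * (U1 \<bullet> X t + s * (u \<bullet> X t) - F s) * (\<lambda>t. 0::real) t))"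
    have hy: "\<And>s t. 0 \<le> s \<Longrightarrow> s \<le> 1 \<Longrightarrow> \<bar>U1 \<bullet> X t + s * (u \<bullet> X t)\<bar> \<le> B"
      unfolding u_def using hyb x y xe ye by blast
    have key: "\<bar>\<sigma> (F 1) - \<sigma> (F 0)\<bar> \<le> \<sigma>1 * (norm u + B * norm V)"
      by (rule path_scalar(1)[where \<kappa>="\<lambda>t. 0" and \<epsilon>="\<lambda>t. 0" and wu=0 and wv=0,
            OF sig_d1 sig_d2 sig_b1 sig_b2 Vb Xb _ _ hy P_def F_def \<Psi>_def]) simp_all
    have "hnet \<sigma> X q (U1 + 0 *\<^sub>R u, W1 + 0 *\<^sub>R V) = \<sigma> (F 0)" unfolding F_def P_def by (rule path_id(1))
    then have hx: "hnet \<sigma> X q x = \<sigma> (F 0)" using xe by simp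
    have "hnet \<sigma> X q (U1 + 1 *\<^sub>R u, W1 + 1 *\<^sub>R V) = \<sigma> (F 1)" unfolding F_def P_def by (rule path_id(1))
    then have hy': "hnet \<sigma> X q y = \<sigma> (F 1)" using ye unfolding u_def V_def by simp
    have dxy: "dist x y = sqrt ((norm u)^2 + (norm V)^2)"
      unfolding dist_norm xe ye u_def V_def by (simp add: norm_Pair norm_minus_commute)
    have "dist (hnet \<sigma> X q x) (hnet \<sigma> X q y) = \<bar>\<sigma> (F 1) - \<sigma> (F 0)\<bar>"
      unfolding hx hy' dist_real_def by simp
    also have "\<dots> \<le> \<sigma>1 * (norm u + B * norm V)" by (rule key)
    also have "\<dots> \<le> L1 \<sigma>1 B * dist x y" unfolding dxy by (rule arith1[OF s1])
    finally show "dist (hnet \<sigma> X q x) (hnet \<sigma> X q y) \<le> L1 \<sigma>1 B * dist x y" .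
  qed
  have lip2: "lipschitz_on (L2 \<sigma>1 \<sigma>2 B) S (gg \<sigma>' X q)"
    unfolding lipschitz_on_def
  proof (intro conjI ballI)
    show "0 \<le> L2 \<sigma>1 \<sigma>2 B" unfolding L2_def using s1 s2 by (simp add: add_nonneg_nonneg)
    fix x y assume x: "x \<in> S" and y: "y \<in> S"
    obtain U1 W1 where xe: "x = (U1, W1)" by (cases x)
    obtain U2 W2 where ye: "y = (U2, W2)" by (cases y)
    obtain wU wV where we: "gg \<sigma>' X q y - gg \<sigma>' X q x = (wU, wV)" by (cases "gg \<sigma>' X q y - gg \<sigma>' X q x")
    define u where "u = U2 - U1"
    define V where "V = W2 - W1"
    define P where "P = (\<lambda>s. softmax (\<lambda>t. X t \<bullet> (W1 *v q) + s * (X t \<bullet> (V *v q))))"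
    define F where "F = (\<lambda>s. \<Sum>t\<in>UNIV. P s t * (U1 \<bullet> X t + s * (u \<bullet> X t)))"
    define \<Psi> where "\<Psi> = (\<lambda>s. (\<Sum>t\<in>UNIV. P s t * (wU \<bullet> X t)) + (\<Sum>t\<in>UNIV. P s t * (U1 \<bullet> X t + s * (u \<bullet> X t) - F s) * (X t \<bullet> (wV *v q))))"
    have hy: "\<And>s t. 0 \<le> s \<Longrightarrow> s \<le> 1 \<Longrightarrow> \<bar>U1 \<bullet> X t + s * (u \<bullet> X t)\<bar> \<le> B"
      unfolding u_def using hyb x y xe ye by blast
    have key: "\<bar>\<sigma>' (F 1) * \<Psi> 1 - \<sigma>' (F 0) * \<Psi> 0\<bar>
           \<le> \<sigma>2 * ((norm u + B * norm V) * (norm wU + B * norm wV)) + \<sigma>1 * (norm wU * norm V + norm u * norm wV + 5 * B * (norm V * norm wV))"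
      by (rule path_scalar(2)[OF sig_d1 sig_d2 sig_b1 sig_b2 Vb Xb Xb Vb hy P_def F_def \<Psi>_def])
    have "gg \<sigma>' X q (U1 + 0 *\<^sub>R u, W1 + 0 *\<^sub>R V) \<bullet> (wU, wV) = \<sigma>' (F 0) * \<Psi> 0"
      unfolding F_def P_def \<Psi>_def by (rule path_id(2))
    then have gx: "gg \<sigma>' X q x \<bullet> (wU, wV) = \<sigma>' (F 0) * \<Psi> 0" using xe by simp
    have "gg \<sigma>' X q (U1 + 1 *\<^sub>R u, W1 + 1 *\<^sub>R V) \<bullet> (wU, wV) = \<sigma>' (F 1) * \<Psi> 1"
      unfolding F_def P_def \<Psi>_def by (rule path_id(2))
    then have gy: "gg \<sigma>' X q y \<bullet> (wU, wV) = \<sigma>' (F 1) * \<Psi> 1" using ye unfolding u_def V_def by simp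
    have dxy: "dist x y = sqrt ((norm u)^2 + (norm V)^2)"
      unfolding dist_norm xe ye u_def V_def by (simp add: norm_Pair norm_minus_commute)
    have nw: "norm (gg \<sigma>' X q y - gg \<sigma>' X q x) = sqrt ((norm wU)^2 + (norm wV)^2)"
      unfolding we by (simp add: norm_Pair)
    define nw where "nw = norm (gg \<sigma>' X q y - gg \<sigma>' X q x)"
    have "nw^2 = (gg \<sigma>' X q y - gg \<sigma>' X q x) \<bullet> (gg \<sigma>' X q y - gg \<sigma>' X q x)"
      unfolding nw_def by (simp add: power2_norm_eq_inner)
    also have "\<dots> = gg \<sigma>' X q y \<bullet> (wU, wV) - gg \<sigma>' X q x \<bullet> (wU, wV)"
      unfolding we[symmetric] by (simp add: inner_diff_left)
    also have "\<dots> \<le> \<bar>\<sigma>' (F 1) * \<Psi> 1 - \<sigma>' (F 0) * \<Psi> 0\<bar>" unfolding gx gy by simp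
    also have "\<dots> \<le> L2 \<sigma>1 \<sigma>2 B * dist x y * nw"
      using order_trans[OF key arith2[OF s1 s2 B0]] unfolding dxy nw_def nw by simp
    finally have main: "nw * nw \<le> (L2 \<sigma>1 \<sigma>2 B * dist x y) * nw" by (simp add: power2_eq_square)
    have "nw \<le> L2 \<sigma>1 \<sigma>2 B * dist x y"
    proof (cases "nw = 0")
      case True
      then show ?thesis using s1 s2 unfolding L2_def by (simp add: add_nonneg_nonneg)
    next
      case False
      then have "nw > 0" unfolding nw_def by simp
      then show ?thesis using main by simp
    qed
    then show "dist (gg \<sigma>' X q x) (gg \<sigma>' X q y) \<le> L2 \<sigma>1 \<sigma>2 B * dist x y"
      unfolding nw_def dist_norm by (simp add: norm_minus_commute)
  qed
  have "lipschitz_on (L1 \<sigma>1 B) S (hnet \<sigma> X q)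
         \<and> (\<exists>g. (\<forall>\<theta>\<in>S. (hnet \<sigma> X q has_derivative (\<lambda>v. g \<theta> \<bullet> v)) (at \<theta>))
                 \<and> lipschitz_on (L2 \<sigma>1 \<sigma>2 B) S g)"
    using lip1 lip2 hnet_fderiv[OF sig_d1] by blast
  then show "let S = {(U, W). norm (U - U0 i) \<le> \<rho>u / sqrt (real m) \<and> norm (W - W0 i) \<le> \<rho>w / sqrt (real m)};
          B = B_U CARD('d) m \<rho>u \<delta>'
      in lipschitz_on (L1 \<sigma>1 B) S (hnet \<sigma> X q)
         \<and> (\<exists>g. (\<forall>\<theta>\<in>S. (hnet \<sigma> X q has_derivative (\<lambda>v. g \<theta> \<bullet> v)) (at \<theta>))
                 \<and> lipschitz_on (L2 \<sigma>1 \<sigma>2 B) S g)"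
    unfolding Let_def S_def B_def .
qed

end
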